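(* Let $q$ be an even prime power (a power of $2$), $m,n\ge1$, let $\mathscr{C}\subseteq\mathrm{GF}(q^m)^n$ be a scalable code and let $\mathscr{B}$ be a basis of $\mathrm{GF}(q^m)$ over $\mathrm{GF}(q)$. If $\mathrm{Im}_{\mathscr{B}}(\mathscr{C})\subseteq\mathrm{GF}(q)^{mn}$ is self-orthogonal w.r.t. the canonical inner product $\sum_{i=1}^{mn}x_iy_i$, then $\mathscr{C}$ is self-orthogonal w.r.t. the canonical inner product $\sum_{i=1}^n x_iy_i$ on $\mathrm{GF}(q^m)^n$.
   Context: $\mathrm{Tr}:\mathrm{GF}(q^m)\to\mathrm{GF}(q)$, $\mathrm{Tr}(a)=\sum_{i=0}^{m-1}a^{q^i}$. The dual basis of a basis $\{\gamma_1,\ldots,\gamma_m\}$ is the unique basis $\{\beta_1,\ldots,\beta_m\}$ with $\mathrm{Tr}(\gamma_i\beta_j)=\delta_{ij}$. A code $\mathscr{C}\subseteq\mathrm{GF}(q^m)^n$ is scalable if $x\in\mathscr{C}\Rightarrow\alpha x\in\mathscr{C}$ for all $\alpha\in\mathrm{GF}(q^m)$. For a basis $\mathscr{B}$ with dual basis $\{\beta_1,\ldots,\beta_m\}$, $\mathrm{Im}_{\mathscr{B}}(\mathscr{C})=\{(\mathrm{Tr}(\beta_1x_1),\ldots,\mathrm{Tr}(\beta_1x_n),\ldots,\mathrm{Tr}(\beta_mx_1),\ldots,\mathrm{Tr}(\beta_mx_n)):x\in\mathscr{C}\}$. A code $D$ is self-orthogonal w.r.t. a form $g$ if $g(x,y)=0$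 for all $x,y\in D$. *)

theory Defs
  imports Main
begin

definition trace :: "nat \<Rightarrow> nat \<Rightarrow> 'a::field \<Rightarrow> 'a" where
  "trace q m a = (\<Sum>i<m. a ^ (q ^ i))"

definition is_subfield :: "'a::field set \<Rightarrow> bool" where
  "is_subfield K \<longleftrightarrow> 0 \<in> K \<and> 1 \<in> K \<and>
     (\<forall>x\<in>K. \<forall>y\<in>K. x + y \<in> K \<and> x * y \<in> K) \<and>
     (\<forall>x\<in>K. - x \<in> K \<and> inverse x \<in> K)"

definition is_basis_over :: "'a::field set \<Rightarrow> nat \<Rightarrow> (nat \<Rightarrow> 'a) \<Rightarrow> bool" where
  "is_basis_over K m gamma \<longleftrightarrow>
     (\<forall>a. \<exists>!c. (\<forall>i<m. c i \<in> K) \<and> (\<forall>i\<ge>m. c i = 0) \<and> a = (\<Sum>i<m. c i * gamma i))"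

definition dual_basis :: "nat \<Rightarrow> nat \<Rightarrow> (nat \<Rightarrow> 'a::field) \<Rightarrow> (nat \<Rightarrow> 'a) \<Rightarrow> bool" where
  "dual_basis q m gamma beta \<longleftrightarrow>
     (\<forall>i<m. \<forall>j<m. trace q m (gamma i * beta j) = (if i = j then 1 else 0))"

definition scalable :: "'a::field list set \<Rightarrow> bool" where
  "scalable C \<longleftrightarrow> (\<forall>x\<in>C. \<forall>\<alpha>. map (\<lambda>xi. \<alpha> * xi) x \<in> C)"

text \<open>Im_B(C), built from the dual basis beta of B.\<close>
definition image_code :: "nat \<Rightarrow> nat \<Rightarrow> (nat \<Rightarrow> 'a::field) \<Rightarrow> 'a list set \<Rightarrow> 'a list set" where
  "image_code q m beta C =
     {concat (map (\<lambda>j. map (\<lambda>xi. trace q m (beta j * xi)) x) [0..<m]) | x. x \<in> C}"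

definition dot :: "'a::field list \<Rightarrow> 'a list \<Rightarrow> 'a" where
  "dot xs ys = sum_list (map2 (*) xs ys)"

definition self_orthogonal :: "'a::field list set \<Rightarrow> bool" where
  "self_orthogonal D \<longleftrightarrow> (\<forall>x\<in>D. \<forall>y\<in>D. dot x y = 0)"

end

theory Submission imports Defs "HOL-Number_Theory.Residues" "HOL-Computational_Algebra.Polynomial" begin

lemma char2:
  assumes "card (UNIV::'a set) = 2^e" "e \<ge> 1"
  shows "(2::'a::{field,finite}) = 0"
proof -
  have "CHAR('a) > 0" by (simp add: finite_imp_CHAR_pos)
  then have p: "prime CHAR('a)" by (rule prime_CHAR_semidom)
  have "CHAR('a) dvd 2^e" using CHAR_dvd_CARD[where 'a='a] assms by simp
  then have "CHAR('a) dvd 2" using p prime_dvd_power by blast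
  then have "CHAR('a) = 2" using p
  proof -
    have "CHAR('a) = 1 \<or> CHAR('a) = 2" using \<open>CHAR('a) dvd 2\<close> two_is_prime_nat prime_nat_iff by blast
    then show ?thesis using p by auto
  qed
  then show "(2::'a)=0" by (metis of_nat_CHAR of_nat_numeral)
qed

lemma frob:
  assumes "(2::'a::comm_ring_1) = 0"
  shows "(a+b)^(2^e) = a^(2^e) + (b::'a)^(2^e)"
proof (induction e)
  case (Suc e)
  have sq: "(x+y)^2 = x^2+y^2" for x y :: 'a
  proof -
    have "(x+y)^2 = x^2+y^2 + 2*x*y" by (simp add: power2_eq_square algebra_simps)
    then show ?thesis using assms by simp
  qed
  have "(a+b)^(2^Suc e) = ((a+b)^(2^e))^2" by (simp add: power_mult[symmetric] mult.commute)
  also have "\<dots> = (a^(2^e))^2 + (b^(2^e))^2" using Suc sq by simp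
  also have "\<dots> = a^(2^Suc e) + b^(2^Suc e)" by (simp add: power_mult[symmetric] mult.commute)
  finally show ?case .
qed simp

lemma frob_sum:
  assumes "(2::'a::comm_ring_1) = 0"
  shows "(\<Sum>j\<in>A. f j)^(2^e) = (\<Sum>j\<in>A. (f j::'a)^(2^e))"
proof (induction A rule: infinite_finite_induct)
  case (insert x F)
  then show ?case using frob[OF assms] by simp
qed (auto simp: zero_power)

lemma trace_add:
  assumes "(2::'a::field) = 0" "q = 2^k"
  shows "trace q m (a+b) = trace q m a + trace q m (b::'a)"
proof -
  have "(a+b)^(q^i) = a^(q^i) + b^(q^i)" for i
    using frob[OF assms(1), of a b "k*i"] assms(2) by (simp add: power_mult)
  then show ?thesis by (simp add: trace_def sum.distrib)
qed

lemma trace_sum: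
  assumes "(2::'a::field) = 0" "q = 2^k"
  shows "trace q m (\<Sum>j\<in>A. f j) = (\<Sum>j\<in>A. trace q m (f j::'a))"
proof (induction A rule: infinite_finite_induct)
  case (insert x F)
  then show ?case using trace_add[OF assms] by simp
qed (use assms in \<open>auto simp: trace_def zero_power\<close>)

lemma trace_zero: "q \<ge> 1 \<Longrightarrow> trace q m (0::'a::field) = 0"
  by (simp add: trace_def zero_power)

lemma trace_mult: "trace q m (c * a) = (\<Sum>k<m. a^(q^k) * (c::'a::field)^(q^k))"
  by (simp add: trace_def power_mult_distrib mult.commute)

lemma poly_coeff0:
  fixes d :: "nat \<Rightarrow> 'a::{field,finite}"
  assumes "q \<ge> 2" "m \<ge> 1" "card (UNIV::'a set) = q^m" "\<And>t. (\<Sum>k<m. d k * t^(q^k)) = 0"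
  shows "d 0 = 0"
proof -
  define p where "p = (\<Sum>k<m. monom (d k) (q^k))"
  have ev: "poly p t = 0" for t using assms(4) by (simp add: p_def poly_sum poly_monom)
  have "p = 0"
  proof (rule ccontr)
    assume "p \<noteq> 0"
    have "card {x. poly p x = 0} \<le> degree p" by (rule card_poly_roots_bound) fact
    moreover have "degree p \<le> q^(m-1)" unfolding p_def
    proof (rule degree_sum_le)
      fix k assume "k \<in> {..<m}"
      then have "q^k \<le> q^(m-1)" using assms by (intro power_increasing) auto
      then show "degree (monom (d k) (q ^ k)) \<le> q ^ (m - 1)"
        using degree_monom_le order_trans by blast
    qed simp
    moreover have "{x. poly p x = 0} = UNIV" using ev by auto
    moreover have "q^(m-1) < q^m" using assms by (intro power_strict_increasing) auto
    ultimately show False using assms(3) by simp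
  qed
  then have "coeff p 1 = 0" by simp
  moreover have "coeff p 1 = (\<Sum>k<m. if k = 0 then d k else 0)"
    unfolding p_def coeff_sum coeff_monom
    by (intro sum.cong refl) (use assms in auto)
  ultimately show ?thesis using assms(2) by (simp add: sum.delta)
qed

lemma dot_nth: "length xs = length ys \<Longrightarrow> dot xs ys = (\<Sum>i<length xs. xs!i * ys!i)"
  by (simp add: dot_def sum_list_sum_nth atLeast0LessThan)

lemma dot_append: "length xs = length ys \<Longrightarrow> dot (xs@xs') (ys@ys') = dot xs ys + dot xs' ys'"
  by (simp add: dot_def)

lemma len_concat: "length (concat (map (\<lambda>j. map (g j) x) [0..<m])) = m * length x"
  by (induction m) auto

lemma dot_image:
  assumes "length x = n" "length y = n"
  shows "dot (concat (map (\<lambda>j. map (\<lambda>xi. f j xi) x) [0..<m]))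
             (concat (map (\<lambda>j. map (\<lambda>xi. f j xi) y) [0..<m]))
         = (\<Sum>j<m. \<Sum>i<n. f j (x!i) * f j (y!i))"
proof (induction m)
  case 0 then show ?case by (simp add: dot_def)
next
  case (Suc m)
  have "dot (concat (map (\<lambda>j. map (\<lambda>xi. f j xi) x) [0..<Suc m]))
             (concat (map (\<lambda>j. map (\<lambda>xi. f j xi) y) [0..<Suc m]))
      = dot (concat (map (\<lambda>j. map (\<lambda>xi. f j xi) x) [0..<m])) (concat (map (\<lambda>j. map (\<lambda>xi. f j xi) y) [0..<m]))
        + dot (map (f m) x) (map (f m) y)"
    by (simp add: len_concat assms dot_append)
  then show ?case using Suc assms by (simp add: dot_nth)
qed

lemma regroup:
  "(\<Sum>j<m. \<Sum>i<n. A j i * (\<Sum>k<m. B j i k * (c k::'a::comm_ring_1)))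
   = (\<Sum>k<m. (\<Sum>j<m. \<Sum>i<n. A j i * B j i k) * c k)"
proof -
  have "(\<Sum>j<m. \<Sum>i<n. A j i * (\<Sum>k<m. B j i k * c k)) = (\<Sum>j<m. \<Sum>i<n. \<Sum>k<m. A j i * B j i k * c k)"
    by (simp add: sum_distrib_left mult.assoc)
  also have "\<dots> = (\<Sum>j<m. \<Sum>k<m. \<Sum>i<n. A j i * B j i k * c k)"
    by (intro sum.cong refl sum.swap)
  also have "\<dots> = (\<Sum>k<m. \<Sum>j<m. \<Sum>i<n. A j i * B j i k * c k)"
    by (rule sum.swap)
  also have "\<dots> = (\<Sum>k<m. (\<Sum>j<m. \<Sum>i<n. A j i * B j i k) * c k)"
    by (simp add: sum_distrib_right)
  finally show ?thesis .
qed


theorem proposition2: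
  fixes K :: "'a::{field,finite} set" and q m n k :: nat
    and gamma beta :: "nat \<Rightarrow> 'a" and C :: "'a list set"
  assumes "q = 2 ^ k" and "k \<ge> 1" and "m \<ge> 1" and "n \<ge> 1"
    and "card (UNIV :: 'a set) = q ^ m"
    and "is_subfield K" and "card K = q"
    and "is_basis_over K m gamma"
    and "dual_basis q m gamma beta"
    and "\<forall>x\<in>C. length x = n"
    and "scalable C"
    and "self_orthogonal (image_code q m beta C)"
  shows "self_orthogonal C"
proof -
  have "card (UNIV :: 'a set) = 2 ^ (k*m)" by (simp only: assms(5) assms(1) power_mult)
  moreover have "k*m \<ge> 1" using assms(2,3) by simp
  ultimately have two: "(2::'a) = 0" by (rule char2)
  have "(2::nat)^1 \<le> 2^k" using assms(2) by (intro power_increasing) auto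
  then have q2: "q \<ge> 2" using assms(1) by simp
  have sig: "(\<Sum>j<m. beta j) \<noteq> 0"
  proof
    assume z: "(\<Sum>j<m. beta j) = 0"
    have "trace q m (gamma 0 * (\<Sum>j<m. beta j)) = (\<Sum>j<m. trace q m (gamma 0 * beta j))"
      by (simp add: sum_distrib_left trace_sum[OF two assms(1)])
    also have "\<dots> = (\<Sum>j<m. if 0 = j then 1 else 0)"
      using assms(9,3) by (intro sum.cong) (auto simp: dual_basis_def)
    also have "\<dots> = 1" using assms(3) by simp
    finally have "trace q m (gamma 0 * (\<Sum>j<m. beta j)) = 1" .
    then have "trace q m (0::'a) = 1" using z by simp
    moreover have "trace q m (0::'a) = 0" using q2 by (intro trace_zero) simp
    ultimately show False by simp
  qed
  show ?thesis unfolding self_orthogonal_def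
  proof (intro ballI)
    fix x y assume xC: "x \<in> C" and yC: "y \<in> C"
    have lx: "length x = n" and ly: "length y = n" using xC yC assms(10) by auto
    define F where "F j a = trace q m (beta j * a)" for j a
    have key: "(\<Sum>j<m. \<Sum>i<n. F j (z * x!i) * F j (\<alpha> * y!i)) = 0" for z \<alpha>
    proof -
      let ?x = "map (\<lambda>xi. z*xi) x" let ?y = "map (\<lambda>xi. \<alpha>*xi) y"
      have "?x \<in> C" "?y \<in> C" using assms(11) xC yC unfolding scalable_def by auto
      then have "concat (map (\<lambda>j. map (\<lambda>xi. trace q m (beta j * xi)) ?x) [0..<m]) \<in> image_code q m beta C"
        "concat (map (\<lambda>j. map (\<lambda>xi. trace q m (beta j * xi)) ?y) [0..<m]) \<in> image_code q m beta C"
        unfolding image_code_def by blast+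
      then have "dot (concat (map (\<lambda>j. map (\<lambda>xi. trace q m (beta j * xi)) ?x) [0..<m]))
                     (concat (map (\<lambda>j. map (\<lambda>xi. trace q m (beta j * xi)) ?y) [0..<m])) = 0"
        using assms(12) unfolding self_orthogonal_def by blast
      moreover have "length ?x = n" "length ?y = n" using lx ly by auto
      note di = dot_image[OF this, of "\<lambda>j xi. trace q m (beta j * xi)" m]
      ultimately show ?thesis using lx ly by (simp add: F_def di)
    qed
    have step1: "(\<Sum>j<m. \<Sum>i<n. F j (z * x!i) * (beta j * y!i)) = 0" for z
    proof -
      have "(\<Sum>k'<m. (\<Sum>j<m. \<Sum>i<n. F j (z*x!i) * (beta j * y!i)^(q^k')) * \<alpha>^(q^k')) = 0" for \<alpha>
      proof -
        have "F j (\<alpha> * y!i) = (\<Sum>k'<m. (beta j * y!i)^(q^k') * \<alpha>^(q^k'))" for j i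
          unfolding F_def using trace_mult[of q m \<alpha> "beta j * y!i"] by (simp add: mult_ac)
        then show ?thesis using key[of z \<alpha>] by (simp add: regroup)
      qed
      from poly_coeff0[OF q2 assms(3) assms(5) this] show ?thesis by simp
    qed
    have step2: "(\<Sum>j<m. \<Sum>i<n. (beta j * y!i) * (beta j * x!i)) = 0"
    proof -
      have "(\<Sum>l<m. (\<Sum>j<m. \<Sum>i<n. (beta j * y!i) * (beta j * x!i)^(q^l)) * z^(q^l)) = 0" for z
      proof -
        have "F j (z * x!i) = (\<Sum>l<m. (beta j * x!i)^(q^l) * z^(q^l))" for j i
          unfolding F_def using trace_mult[of q m z "beta j * x!i"] by (simp add: mult_ac)
        then have "(\<Sum>j<m. \<Sum>i<n. (beta j * y!i) * (\<Sum>l<m. (beta j * x!i)^(q^l) * z^(q^l))) = 0"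
          using step1[of z] by (simp add: mult.commute)
        then show ?thesis by (simp add: regroup)
      qed
      from poly_coeff0[OF q2 assms(3) assms(5) this] show ?thesis by simp
    qed
    have "(\<Sum>j<m. \<Sum>i<n. (beta j * y!i) * (beta j * x!i)) = (\<Sum>j<m. beta j ^ 2) * (\<Sum>i<n. x!i * y!i)"
      by (simp add: sum_distrib_left sum_distrib_right power2_eq_square mult_ac) (rule sum.swap)
    also have "(\<Sum>j<m. beta j ^ 2) = (\<Sum>j<m. beta j) ^ 2"
      using frob_sum[OF two, of beta "{..<m}" 1] by simp
    finally have "(\<Sum>j<m. beta j) ^ 2 * (\<Sum>i<n. x!i * y!i) = 0" using step2 by simp
    then have "(\<Sum>i<n. x!i * y!i) = 0" using sig by simp
    then show "dot x y = 0" using dot_nth[of x y] lx ly by simp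
  qed
qed

end
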